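(* Let $H$ be an undirected simple graph on a vertex set $V$ with $|V|=n$, and let $\tilde d$ be the average degree of $H$. Let $w$ be chosen uniformly at random from $V$, and let $N_w(H)$ be the graph on vertex set $V$ obtained from $H$ by deleting every edge incident to a vertex of $\Gamma_H(w)$. Then the expected number of edges deleted, $\mathbb{E}\big[|E(H)|-|E(N_w(H))|\big]$, is at least $\binom{\tilde d+1}{2}=\frac{(\tilde d+1)\tilde d}{2}$.
   Context: $\Gamma_H(w)$ denotes the set of neighbours of $w$ in $H$ (not including $w$ itself). In the paper this is applied to a random sequence $G_0=G$, $G_{i+1}=N_{v_{i+1}}(G_i)$, where the $v_i$ are chosen independently and uniformly at random from $V(G_0)$; the statement is that, conditionally on $G_i$ with average degree $\tilde d$, the number of edges decreases in expectation by at least $\binom{\tilde d+1}{2}$ when going from $G_i$ to $G_{i+1}$. *)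

theory Defs
  imports Complex_Main
begin

definition simple_graph :: "'a set \<Rightarrow> 'a set set \<Rightarrow> bool" where
  "simple_graph V E \<longleftrightarrow> finite V \<and> (\<forall>e\<in>E. e \<subseteq> V \<and> card e = 2)"

definition nbhd :: "'a set set \<Rightarrow> 'a \<Rightarrow> 'a set" where
  "nbhd E w = {u. {w, u} \<in> E}"

definition degree :: "'a set set \<Rightarrow> 'a \<Rightarrow> nat" where
  "degree E w = card (nbhd E w)"

definition avg_degree :: "'a set \<Rightarrow> 'a set set \<Rightarrow> real" where
  "avg_degree V E = (\<Sum>v\<in>V. real (degree E v)) / real (card V)"

definition N_op :: "'a \<Rightarrow> 'a set set \<Rightarrow> 'a set set" where
  "N_op w E = {e \<in> E. e \<inter> nbhd E w = {}}"

end

theory Submission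
  imports Defs
begin

lemma deg_edges:
  assumes "simple_graph V E"
  shows "degree E u = card {e\<in>E. u\<in>e}"
proof -
  have "bij_betw (\<lambda>v. {u,v}) (nbhd E u) {e\<in>E. u\<in>e}"
  proof (rule bij_betwI')
    fix x y assume "x \<in> nbhd E u" "y \<in> nbhd E u"
    then have "card {u,x} = 2" "card {u,y} = 2" using assms by (auto simp: nbhd_def simple_graph_def)
    then have "x \<noteq> u" "y \<noteq> u" by auto
    then show "({u, x} = {u, y}) = (x = y)" by (auto simp: doubleton_eq_iff)
  next
    fix x assume "x \<in> nbhd E u" then show "{u, x} \<in> {e \<in> E. u \<in> e}" by (auto simp: nbhd_def)
  next
    fix e assume e: "e \<in> {e \<in> E. u \<in> e}"
    then have "card e = 2" using assms by (auto simp: simple_graph_def)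
    then obtain a b where "e = {a,b}" "a \<noteq> b" by (auto simp: card_2_iff)
    with e show "\<exists>x\<in>nbhd E u. e = {u, x}"
      by (auto simp: nbhd_def insert_commute)
  qed
  then show ?thesis unfolding degree_def by (rule bij_betw_same_card)
qed

lemma double_count:
  assumes "finite E" "finite S"
  shows "(\<Sum>u\<in>S. card {e\<in>E. u\<in>e}) = (\<Sum>e\<in>E. card (e \<inter> S))"
proof -
  have "(\<Sum>u\<in>S. card {e\<in>E. u\<in>e}) = (\<Sum>u\<in>S. \<Sum>e\<in>E. if u \<in> e then 1 else 0)"
    using assms by (simp add: sum.inter_filter[symmetric])
  also have "\<dots> = (\<Sum>e\<in>E. \<Sum>u\<in>S. if u \<in> e then 1 else 0)" by (rule sum.swap)
  also have "\<dots> = (\<Sum>e\<in>E. card {u\<in>S. u\<in>e})"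
    using assms by (simp add: sum.inter_filter[symmetric])
  also have "\<dots> = (\<Sum>e\<in>E. card (e \<inter> S))"
    by (rule sum.cong) (auto intro: arg_cong[where f=card])
  finally show ?thesis .
qed

lemma finite_E: "simple_graph V E \<Longrightarrow> finite E"
  unfolding simple_graph_def by (meson Pow_iff finite_Pow_iff rev_finite_subset subsetI)

lemma nbhd_sub: "simple_graph V E \<Longrightarrow> nbhd E w \<subseteq> V"
  unfolding simple_graph_def nbhd_def by auto

lemma per_w:
  assumes G: "simple_graph V E"
  shows "degree E w + (\<Sum>u\<in>nbhd E w. degree E u) \<le> 2 * (card E - card (N_op w E))"
proof -
  let ?S = "nbhd E w"
  let ?D = "E - N_op w E"
  have fE: "finite E" using finite_E[OF G] .
  have fS: "finite ?S" using nbhd_sub[OF G] G by (meson finite_subset simple_graph_def)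
  have wS: "w \<notin> ?S" using G unfolding simple_graph_def nbhd_def by fastforce
  have z: "\<forall>i\<in>E - ?D. card (i \<inter> insert w ?S) = 0"
  proof
    fix e assume e: "e \<in> E - ?D"
    then have "e \<inter> ?S = {}" "e \<in> E" by (auto simp: N_op_def)
    moreover have "w \<notin> e"
    proof
      assume "w \<in> e"
      have "card e = 2" using G \<open>e \<in> E\<close> by (auto simp: simple_graph_def)
      then obtain a b where "e = {a,b}" "a \<noteq> b" by (auto simp: card_2_iff)
      then obtain v where "e = {w,v}" using \<open>w \<in> e\<close> by (auto simp: insert_commute)
      then have "v \<in> ?S" using \<open>e \<in> E\<close> by (simp add: nbhd_def)
      with \<open>e \<inter> ?S = {}\<close> \<open>e = {w,v}\<close> show False by auto
    qed
    ultimately have "e \<inter> insert w ?S = {}" by auto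
    then show "card (e \<inter> insert w ?S) = 0" by simp
  qed
  have "(\<Sum>e\<in>E. card (e \<inter> insert w ?S)) = (\<Sum>e\<in>?D. card (e \<inter> insert w ?S))"
    using sum.mono_neutral_right[OF fE _ z] by blast
  have "degree E w + (\<Sum>u\<in>?S. degree E u) = (\<Sum>u\<in>insert w ?S. card {e\<in>E. u\<in>e})"
    using fS wS by (simp add: deg_edges[OF G])
  also have "\<dots> = (\<Sum>e\<in>E. card (e \<inter> insert w ?S))"
    using fE fS by (intro double_count) auto
  also have "\<dots> = (\<Sum>e\<in>?D. card (e \<inter> insert w ?S))" by fact
  also have "\<dots> \<le> (\<Sum>e\<in>?D. 2)"
  proof (rule sum_mono)
    fix e assume "e \<in> ?D"
    then have "card e = 2" using G by (auto simp: simple_graph_def)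
    then show "card (e \<inter> insert w ?S) \<le> 2"
      by (metis card_mono Int_lower1 card.infinite zero_neq_numeral)
  qed
  also have "\<dots> = 2 * card ?D" by simp
  also have "card ?D = card E - card (N_op w E)"
    using fE by (intro card_Diff_subset) (auto simp: N_op_def intro: finite_subset)
  finally show ?thesis by simp
qed

lemma swap_sq:
  assumes G: "simple_graph V E"
  shows "(\<Sum>w\<in>V. \<Sum>u\<in>nbhd E w. degree E u) = (\<Sum>u\<in>V. degree E u * degree E u)"
proof -
  have fV: "finite V" using G by (simp add: simple_graph_def)
  have "(\<Sum>w\<in>V. \<Sum>u\<in>nbhd E w. degree E u) = (\<Sum>w\<in>V. \<Sum>u\<in>V. if u \<in> nbhd E w then degree E u else 0)"
  proof (rule sum.cong)
    fix w assume "w \<in> V"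
    have "nbhd E w = {u\<in>V. u \<in> nbhd E w}" using nbhd_sub[OF G] by auto
    then show "(\<Sum>u\<in>nbhd E w. degree E u) = (\<Sum>u\<in>V. if u \<in> nbhd E w then degree E u else 0)"
      using fV by (metis sum.inter_filter)
  qed simp
  also have "\<dots> = (\<Sum>u\<in>V. \<Sum>w\<in>V. if u \<in> nbhd E w then degree E u else 0)" by (rule sum.swap)
  also have "\<dots> = (\<Sum>u\<in>V. degree E u * degree E u)"
  proof (rule sum.cong)
    fix u assume "u \<in> V"
    have eq: "{w\<in>V. u \<in> nbhd E w} = nbhd E u"
      using G unfolding simple_graph_def nbhd_def by (auto simp: insert_commute)
    have "(\<Sum>w\<in>V. if u \<in> nbhd E w then degree E u else 0) = (\<Sum>w\<in>{w\<in>V. u \<in> nbhd E w}. degree E u)"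
      using fV by (simp only: sum.inter_filter)
    also have "\<dots> = degree E u * degree E u" using eq by (simp add: degree_def)
    finally show "(\<Sum>w\<in>V. if u \<in> nbhd E w then degree E u else 0) = degree E u * degree E u" .
  qed simp
  finally show ?thesis .
qed

lemma cs:
  fixes f :: "'a \<Rightarrow> real"
  assumes "finite V" "V \<noteq> {}"
  shows "(\<Sum>v\<in>V. f v)^2 / real (card V) \<le> (\<Sum>v\<in>V. f v * f v)"
proof -
  let ?n = "real (card V)" let ?s = "\<Sum>v\<in>V. f v" let ?A = "?s / ?n"
  have n: "?n > 0" using assms by (simp add: card_gt_0_iff)
  have "0 \<le> (\<Sum>v\<in>V. (f v - ?A)^2)" by (simp add: sum_nonneg)
  also have "\<dots> = (\<Sum>v\<in>V. f v * f v - 2 * ?A * f v + ?A^2)"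
    by (rule sum.cong) (simp_all add: power2_eq_square algebra_simps)
  also have "\<dots> = (\<Sum>v\<in>V. f v * f v) - 2 * ?A * ?s + ?n * ?A^2"
    by (simp add: sum.distrib sum_subtractf sum_distrib_left[symmetric] sum_divide_distrib[symmetric])
  also have "\<dots> = (\<Sum>v\<in>V. f v * f v) - ?s^2 / ?n"
    using n by (simp add: field_simps power2_eq_square)
  finally show ?thesis by simp
qed

theorem lemma3p2:
  fixes V :: "'a set" and E :: "'a set set"
  assumes "simple_graph V E" and "V \<noteq> {}"
  shows "(\<Sum>w\<in>V. real (card E - card (N_op w E))) / real (card V)
           \<ge> (avg_degree V E + 1) * avg_degree V E / 2"
proof -
  have G: "simple_graph V E" by fact
  have fV: "finite V" using G by (simp add: simple_graph_def)
  let ?n = "real (card V)"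
  let ?d = "\<lambda>v. real (degree E v)"
  let ?s = "\<Sum>v\<in>V. ?d v"
  have n: "?n > 0" using fV assms(2) by (simp add: card_gt_0_iff)
  have "(\<Sum>w\<in>V. ?d w + (\<Sum>u\<in>nbhd E w. ?d u)) \<le> (\<Sum>w\<in>V. 2 * real (card E - card (N_op w E)))"
  proof (rule sum_mono)
    fix w assume "w \<in> V"
    have "real (degree E w + (\<Sum>u\<in>nbhd E w. degree E u)) \<le> real (2 * (card E - card (N_op w E)))"
      using per_w[OF G, of w] by linarith
    then show "?d w + (\<Sum>u\<in>nbhd E w. ?d u) \<le> 2 * real (card E - card (N_op w E))" by simp
  qed
  moreover have "(\<Sum>w\<in>V. ?d w + (\<Sum>u\<in>nbhd E w. ?d u)) = ?s + (\<Sum>u\<in>V. ?d u * ?d u)"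
  proof -
    have "real (\<Sum>w\<in>V. \<Sum>u\<in>nbhd E w. degree E u) = real (\<Sum>u\<in>V. degree E u * degree E u)"
      using swap_sq[OF G] by simp
    then show ?thesis by (simp add: sum.distrib)
  qed
  moreover have "?s^2 / ?n \<le> (\<Sum>u\<in>V. ?d u * ?d u)" using cs[OF fV assms(2)] .
  ultimately have key: "?s + ?s^2 / ?n \<le> 2 * (\<Sum>w\<in>V. real (card E - card (N_op w E)))"
    by (simp add: sum_distrib_left[symmetric])
  have "(avg_degree V E + 1) * avg_degree V E / 2 = (?s + ?s^2 / ?n) / (2 * ?n)"
    unfolding avg_degree_def using n by (simp add: field_simps power2_eq_square)
  also have "\<dots> \<le> (2 * (\<Sum>w\<in>V. real (card E - card (N_op w E)))) / (2 * ?n)"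
    using key n by (intro divide_right_mono) auto
  also have "\<dots> = (\<Sum>w\<in>V. real (card E - card (N_op w E))) / ?n" by simp
  finally show ?thesis by simp
qed
end
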